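(* Let $r\geq3$ and $n>k_1\geq\cdots\geq k_r\geq t+2$. Let $\mathcal{F}_1\subseteq\Pi(n,k_1),\ldots,\mathcal{F}_r\subseteq\Pi(n,k_r)$ be nonempty, non-trivial and $r$-cross $t$-intersecting, with $s_i=t$ for all $i\in[r]$. Then: (i) for each $j\in[r]$, every $t$-cover of $\mathcal{G}_j$ is a $(t+1)$-cover of all but at most one of the families $\mathcal{F}_i$, $i\in[r]\setminus\{j\}$; (ii) $\tau_t(\mathcal{F}_i)=t$ and $\tau_t(\mathcal{G}_i)\geq t+2$ for all $i\in[r]$.
   Context: $[n]=\{1,\ldots,n\}$. A partition is a set of pairwise disjoint nonempty sets (blocks); $|P|$ is its number of blocks, $F\cap G$ the set of common blocks. $\Pi(n,k)$ is the set of partitions of $[n]$ into $k$ blocks. Families $\mathcal{F}_i\subseteq\Pi(n,k_i)$ are $r$-cross $t$-intersecting if $|F_1\cap\cdots\cap F_r|\geq t$ for all $F_i\in\mathcal{F}_i$; non-trivial if fewer than $t$ blocks belong to every member of every $\mathcal{F}_i$. $\mathcal{G}_i:=\{\bigcap_{j\neq i}F_j:F_j\in\mathcal{F}_j,\ j\neq i\}$ and $s_i:=\min\{|G|:G\in\mathcal{G}_i\}$. An $s$-cover of a family of partitions is a partition (not necessarily of $[n]$) sharing at least $s$ blocks with every member; $\tau_t$ is the minimal number of blocks of a $t$-cover. *)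

theory Defs
  imports Main "HOL-Library.Extended_Nat"
begin

definition is_partition :: "'a set set \<Rightarrow> bool" where
  "is_partition P \<longleftrightarrow> (\<forall>B\<in>P. B \<noteq> {}) \<and> (\<forall>B\<in>P. \<forall>C\<in>P. B \<noteq> C \<longrightarrow> B \<inter> C = {})"

definition Part :: "nat \<Rightarrow> nat \<Rightarrow> nat set set set" where
  "Part n k = {P. is_partition P \<and> \<Union>P = {1..n} \<and> card P = k}"

definition cross_intersecting :: "nat \<Rightarrow> nat \<Rightarrow> (nat \<Rightarrow> 'a set set set) \<Rightarrow> bool" where
  "cross_intersecting r t F \<longleftrightarrow>
     (\<forall>f. (\<forall>i\<in>{1..r}. f i \<in> F i) \<longrightarrow> t \<le> card (\<Inter>i\<in>{1..r}. f i))"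

definition non_trivial :: "nat \<Rightarrow> nat \<Rightarrow> (nat \<Rightarrow> 'a set set set) \<Rightarrow> bool" where
  "non_trivial r t F \<longleftrightarrow> card (\<Inter>i\<in>{1..r}. \<Inter>(F i)) < t"

definition Gfam :: "nat \<Rightarrow> (nat \<Rightarrow> 'a set set set) \<Rightarrow> nat \<Rightarrow> 'a set set set" where
  "Gfam r F i = {(\<Inter>j\<in>{1..r}-{i}. f j) | f. \<forall>j\<in>{1..r}-{i}. f j \<in> F j}"

definition s_param :: "nat \<Rightarrow> (nat \<Rightarrow> 'a set set set) \<Rightarrow> nat \<Rightarrow> nat" where
  "s_param r F i = Min (card ` Gfam r F i)"

definition is_cover :: "nat \<Rightarrow> 'a set set \<Rightarrow> 'a set set set \<Rightarrow> bool" where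
  "is_cover s C FF \<longleftrightarrow> is_partition C \<and> (\<forall>P\<in>FF. s \<le> card (C \<inter> P))"

text \<open>tau_t: minimal number of blocks of a t-cover (infinity if there is no finite t-cover).\<close>
definition tau :: "nat \<Rightarrow> 'a set set set \<Rightarrow> enat" where
  "tau t FF = (INF C \<in> {C. finite C \<and> is_cover t C FF}. enat (card C))"

end

theory Submission
  imports Defs
begin

lemma is_partition_subset: "is_partition P \<Longrightarrow> Q \<subseteq> P \<Longrightarrow> is_partition Q"
  unfolding is_partition_def by blast

theorem mainTheorem15:
  fixes r n t :: nat and k :: "nat \<Rightarrow> nat" and F :: "nat \<Rightarrow> nat set set set"
  assumes "3 \<le> r"
    and "k 1 < n"
    and "\<forall>i\<in>{1..<r}. k (Suc i) \<le> k i"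
    and "t + 2 \<le> k r"
    and "\<forall>i\<in>{1..r}. F i \<subseteq> Part n (k i) \<and> F i \<noteq> {}"
    and "non_trivial r t F"
    and "cross_intersecting r t F"
    and "\<forall>i\<in>{1..r}. s_param r F i = t"
  shows "(\<forall>j\<in>{1..r}. \<forall>C. is_cover t C (Gfam r F j) \<longrightarrow>
            card {i\<in>{1..r}-{j}. \<not> is_cover (t+1) C (F i)} \<le> 1)
       \<and> (\<forall>i\<in>{1..r}. tau t (F i) = enat t \<and> enat (t + 2) \<le> tau t (Gfam r F i))"
proof -
  define I where "I = {1..r}"
  have fin: "finite P \<and> is_partition P \<and> P \<subseteq> Pow {1..n}" if "i \<in> I" "P \<in> F i" for i P
  proof -
    have "P \<in> Part n (k i)" using assms(5) that I_def by auto
    then have "is_partition P" "\<Union>P = {1..n}" by (auto simp: Part_def)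
    then have "P \<subseteq> Pow {1..n}" by auto
    then show ?thesis using finite_subset \<open>is_partition P\<close> by blast
  qed
  have other: "\<exists>j. j \<in> I - {i}" if "i \<in> I" for i
    using assms(1) that unfolding I_def
    by (rule_tac x="if i = 1 then 2 else 1" in exI) auto
  have inter_fin: "finite (\<Inter>j\<in>I-{i}. g j) \<and> is_partition (\<Inter>j\<in>I-{i}. g j)
      \<and> (\<Inter>j\<in>I-{i}. g j) \<subseteq> Pow {1..n}"
    if hi: "i \<in> I" and hg: "\<forall>j\<in>I-{i}. g j \<in> F j" for i g
  proof -
    obtain j0 where j0: "j0 \<in> I - {i}" using other hi by blast
    have s: "(\<Inter>j\<in>I-{i}. g j) \<subseteq> g j0" using j0 by blast
    have "finite (g j0) \<and> is_partition (g j0) \<and> g j0 \<subseteq> Pow {1..n}"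
      using fin[of j0 "g j0"] j0 hg by blast
    then show ?thesis using s finite_subset is_partition_subset by blast
  qed
  have cross: "t \<le> card (P \<inter> (\<Inter>j\<in>I-{i}. g j))"
    if "i \<in> I" "\<forall>j\<in>I-{i}. g j \<in> F j" "P \<in> F i" for i g P
  proof -
    let ?f = "g(i := P)"
    have "\<forall>j\<in>I. ?f j \<in> F j" using that by auto
    then have "t \<le> card (\<Inter>j\<in>I. ?f j)" using assms(7) unfolding cross_intersecting_def I_def by blast
    moreover have "(\<Inter>j\<in>I. ?f j) = P \<inter> (\<Inter>j\<in>I-{i}. g j)"
      using that(1) by (auto split: if_splits)
    ultimately show ?thesis by simp
  qed
  have Gmem: "(\<Inter>j\<in>I-{i}. g j) \<in> Gfam r F i" if "\<forall>j\<in>I-{i}. g j \<in> F j" for i g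
    using that unfolding Gfam_def I_def by blast
  have Gdest: "\<exists>g. (\<forall>j\<in>I-{i}. g j \<in> F j) \<and> G = (\<Inter>j\<in>I-{i}. g j)" if "G \<in> Gfam r F i" for i G
    using that unfolding Gfam_def I_def by blast
  have smin: "t \<in> card ` Gfam r F i \<and> (\<forall>G \<in> Gfam r F i. t \<le> card G)" if "i \<in> I" for i
  proof -
    have "Gfam r F i \<subseteq> Pow (Pow {1..n})"
    proof
      fix G assume "G \<in> Gfam r F i"
      then obtain g where "\<forall>j\<in>I-{i}. g j \<in> F j" "G = (\<Inter>j\<in>I-{i}. g j)" using Gdest by blast
      then show "G \<in> Pow (Pow {1..n})" using inter_fin[OF that] by blast
    qed
    then have f: "finite (card ` Gfam r F i)" by (meson finite_Pow_iff finite_atLeastAtMost finite_imageI finite_subset)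
    define g where "g = (\<lambda>j. SOME P. P \<in> F j)"
    have "\<forall>j\<in>I-{i}. g j \<in> F j" unfolding g_def using assms(5) I_def by (metis Diff_iff ex_in_conv someI)
    then have ne: "card ` Gfam r F i \<noteq> {}" using Gmem by blast
    have "s_param r F i = t" using assms(8) that I_def by auto
    then have "Min (card ` Gfam r F i) = t" unfolding s_param_def .
    then show ?thesis using Min_in[OF f ne] Min_le[OF f] by auto
  qed
  have "\<forall>i\<in>I. \<exists>g. (\<forall>j\<in>I-{i}. g j \<in> F j) \<and> card (\<Inter>j\<in>I-{i}. g j) = t"
  proof
    fix i assume "i \<in> I"
    then obtain G where "G \<in> Gfam r F i" "card G = t" using smin by blast
    then show "\<exists>g. (\<forall>j\<in>I-{i}. g j \<in> F j) \<and> card (\<Inter>j\<in>I-{i}. g j) = t" using Gdest by blast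
  qed
  then have "\<exists>fT. \<forall>i\<in>I. (\<forall>j\<in>I-{i}. fT i j \<in> F j) \<and> card (\<Inter>j\<in>I-{i}. fT i j) = t"
    by (rule bchoice)
  then obtain fT where fT: "\<forall>i\<in>I. (\<forall>j\<in>I-{i}. fT i j \<in> F j) \<and> card (\<Inter>j\<in>I-{i}. fT i j) = t"
    by blast
  define T where "T i = (\<Inter>j\<in>I-{i}. fT i j)" for i
  have Tfin: "finite (T i) \<and> is_partition (T i) \<and> card (T i) = t" if "i \<in> I" for i
  proof -
    have "\<forall>j\<in>I-{i}. fT i j \<in> F j" "card (\<Inter>j\<in>I-{i}. fT i j) = t" using fT that by auto
    then show ?thesis using inter_fin[OF that] unfolding T_def by simp
  qed
  have TG: "T i \<in> Gfam r F i" if "i \<in> I" for i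
    using Gmem fT that unfolding T_def by blast
  have TP: "T i \<subseteq> P" if "i \<in> I" "P \<in> F i" for i P
  proof -
    have "t \<le> card (P \<inter> T i)" using cross[OF that(1) _ that(2)] fT that(1) unfolding T_def by blast
    then have "P \<inter> T i = T i" using Tfin[OF that(1)] by (metis card_seteq inf_le2)
    then show ?thesis by blast
  qed
  have nontriv: "\<exists>m\<in>I. \<exists>P\<in>F m. \<not> T i \<subseteq> P" if "i \<in> I" for i
  proof (rule ccontr)
    assume "\<not> ?thesis"
    then have s: "T i \<subseteq> (\<Inter>m\<in>I. \<Inter>(F m))" by blast
    have "1 \<in> I" using assms(1) I_def by auto
    then obtain P1 where "P1 \<in> F 1" using assms(5) I_def by blast
    then have "finite (\<Inter>m\<in>I. \<Inter>(F m))" using fin \<open>1 \<in> I\<close>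
      by (meson INT_lower Inter_lower finite_subset)
    then have "card (T i) \<le> card (\<Inter>m\<in>I. \<Inter>(F m))" using s card_mono by blast
    then show False using assms(6) Tfin[OF that] unfolding non_trivial_def I_def by simp
  qed
  have part1: False
    if hj: "j \<in> I" and hC: "is_cover t C (Gfam r F j)" and ha: "a \<in> I-{j}" and hb: "b \<in> I-{j}"
      and hab: "a \<noteq> b" and nca: "\<not> is_cover (t+1) C (F a)" and ncb: "\<not> is_cover (t+1) C (F b)"
    for j C a b
  proof -
    have pC: "is_partition C" and cov: "\<forall>G\<in>Gfam r F j. t \<le> card (C \<inter> G)"
      using hC unfolding is_cover_def by auto
    obtain Pa where Pa: "Pa \<in> F a" "card (C \<inter> Pa) \<le> t" using nca pC unfolding is_cover_def by force
    obtain Pb where Pb: "Pb \<in> F b" "card (C \<inter> Pb) \<le> t" using ncb pC unfolding is_cover_def by force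
    have Sgen: "C \<inter> (\<Inter>l\<in>I-{j}. g l) = C \<inter> P"
      if "\<forall>l\<in>I-{j}. g l \<in> F l" "c \<in> I-{j}" "g c = P" "card (C \<inter> P) \<le> t" for g c P
    proof -
      have "finite P" using fin that by blast
      have sub: "C \<inter> (\<Inter>l\<in>I-{j}. g l) \<subseteq> C \<inter> P" using that by blast
      have "t \<le> card (C \<inter> (\<Inter>l\<in>I-{j}. g l))" using cov Gmem that(1) by blast
      then show ?thesis using sub \<open>finite P\<close> that(4) card_seteq
        by (metis finite_Int le_trans)
    qed
    have fTj: "\<forall>l\<in>I-{j}. fT j l \<in> F l" using fT hj by blast
    let ?g0 = "(fT j)(a := Pa, b := Pb)"
    have g0: "\<forall>l\<in>I-{j}. ?g0 l \<in> F l" using fTj Pa Pb by auto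
    have "C \<inter> (\<Inter>l\<in>I-{j}. ?g0 l) = C \<inter> Pa" using Sgen[OF g0 ha _ Pa(2)] hab by simp
    moreover have "C \<inter> (\<Inter>l\<in>I-{j}. ?g0 l) = C \<inter> Pb" using Sgen[OF g0 hb _ Pb(2)] by simp
    ultimately have eqab: "C \<inter> Pa = C \<inter> Pb" by simp
    have sub: "C \<inter> Pa \<subseteq> Q" if "l \<in> I-{j}" "Q \<in> F l" for l Q
    proof (cases "l = a")
      case True
      let ?g = "(fT j)(b := Pb, a := Q)"
      have g: "\<forall>l\<in>I-{j}. ?g l \<in> F l" using fTj Pb that True by auto
      have "C \<inter> (\<Inter>l\<in>I-{j}. ?g l) = C \<inter> Pb" using Sgen[OF g hb _ Pb(2)] hab by simp
      moreover have "(\<Inter>l\<in>I-{j}. ?g l) \<subseteq> Q" using ha by auto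
      ultimately show ?thesis using eqab by blast
    next
      case False
      let ?g = "(fT j)(a := Pa, l := Q)"
      have g: "\<forall>l\<in>I-{j}. ?g l \<in> F l" using fTj Pa that by auto
      have "C \<inter> (\<Inter>l\<in>I-{j}. ?g l) = C \<inter> Pa" using Sgen[OF g ha _ Pa(2)] False by simp
      moreover have "(\<Inter>l\<in>I-{j}. ?g l) \<subseteq> Q" using that by auto
      ultimately show ?thesis by blast
    qed
    have sT: "C \<inter> Pa \<subseteq> T j" unfolding T_def using sub fTj by blast
    let ?g1 = "(fT j)(a := Pa)"
    have g1: "\<forall>l\<in>I-{j}. ?g1 l \<in> F l" using fTj Pa by auto
    have "t \<le> card (C \<inter> (\<Inter>l\<in>I-{j}. ?g1 l))" using cov Gmem g1 by blast
    then have "t \<le> card (C \<inter> Pa)" using Sgen[OF g1 ha _ Pa(2)] by simp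
    then have "C \<inter> Pa = T j" using sT Tfin[OF hj] card_seteq by metis
    then have "\<forall>l\<in>I. \<forall>Q\<in>F l. T j \<subseteq> Q" using sub TP by (metis Diff_iff empty_iff insert_iff)
    then show False using nontriv[OF hj] by blast
  qed
  have part2: False
    if hi: "i \<in> I" and fC: "finite C" and hC: "is_cover t C (Gfam r F i)" and cC: "card C \<le> t + 1"
    for i C
  proof -
    have cov: "\<forall>G\<in>Gfam r F i. t \<le> card (C \<inter> G)"
      using hC unfolding is_cover_def by auto
    have Ti: "finite (T i)" "card (T i) = t" using Tfin[OF hi] by auto
    have "t \<le> card (C \<inter> T i)" using cov TG[OF hi] by blast
    then have "C \<inter> T i = T i" using Ti card_seteq by (metis inf_le2)
    then have TC: "T i \<subseteq> C" by blast
    obtain m P A where mP: "m \<in> I" "P \<in> F m" "A \<in> T i" "A \<notin> P" using nontriv[OF hi] by blast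
    have mi: "m \<noteq> i" using TP[OF hi] mP by blast
    have AC: "A \<in> C" using TC mP by blast
    have K: "C - {A} \<subseteq> (\<Inter>l\<in>I-{i}. g l) \<and> t + 1 \<le> card C"
      if "\<forall>l\<in>I-{i}. g l \<in> F l" "A \<notin> (\<Inter>l\<in>I-{i}. g l)" for g
    proof -
      have s: "C \<inter> (\<Inter>l\<in>I-{i}. g l) \<subseteq> C - {A}" using that(2) by blast
      have c1: "card (C - {A}) = card C - 1" using AC fC by simp
      have "t \<le> card (C \<inter> (\<Inter>l\<in>I-{i}. g l))" using cov Gmem that(1) by blast
      moreover have "card (C \<inter> (\<Inter>l\<in>I-{i}. g l)) \<le> card (C - {A})" using s fC by (simp add: card_mono)
      ultimately have "C \<inter> (\<Inter>l\<in>I-{i}. g l) = C - {A}" using s fC cC c1 card_seteq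
        by (metis finite_Diff le_diff_conv le_trans)
      moreover have "card C \<ge> 1" using AC fC by (metis card_0_eq empty_iff less_one not_le)
      ultimately show ?thesis using c1 \<open>t \<le> card (C \<inter> (\<Inter>l\<in>I-{i}. g l))\<close> by auto
    qed
    have fTi: "\<forall>l\<in>I-{i}. fT i l \<in> F l" using fT hi by blast
    let ?g1 = "(fT i)(m := P)"
    have g1: "\<forall>l\<in>I-{i}. ?g1 l \<in> F l" using fTi mP by auto
    have "A \<notin> (\<Inter>l\<in>I-{i}. ?g1 l)" using mP mi by auto
    then have K1: "C - {A} \<subseteq> (\<Inter>l\<in>I-{i}. ?g1 l)" "t + 1 \<le> card C" using K[OF g1] by auto
    obtain B where B: "B \<in> C" "B \<notin> T i"
    proof (rule ccontr)
      assume "\<not> thesis"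
      then have "C \<subseteq> T i" using that by blast
      then have "card C \<le> t" using Ti card_mono by metis
      then show False using K1 by simp
    qed
    have BA: "B \<noteq> A" using B mP by blast
    have BnfT: "B \<notin> fT i m"
    proof
      assume Bm: "B \<in> fT i m"
      have "B \<in> (\<Inter>l\<in>I-{i}. ?g1 l)" using K1 B BA by blast
      then have "B \<in> (\<Inter>l\<in>I-{i}. fT i l)" using Bm by auto
      then show False using B unfolding T_def by blast
    qed
    have fTm: "\<forall>l\<in>I-{m}. fT m l \<in> F l" using fT mP by blast
    show False
    proof (cases "\<forall>l\<in>I-{m}. A \<in> fT m l")
      case True
      let ?h = "(fT m)(m := P)"
      have h: "\<forall>l\<in>I-{i}. ?h l \<in> F l" using fTm mP by auto
      have "A \<notin> (\<Inter>l\<in>I-{i}. ?h l)" using mP mi by auto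
      then have Kh: "C - {A} \<subseteq> (\<Inter>l\<in>I-{i}. ?h l)" using K[OF h] by auto
      have "T i \<subseteq> T m" unfolding T_def[of m]
      proof (rule INT_greatest)
        fix l assume l: "l \<in> I - {m}"
        show "T i \<subseteq> fT m l"
        proof (cases "l = i")
          case True
          then show ?thesis using TP[OF hi] fTm l by blast
        next
          case False
          have "C - {A} \<subseteq> ?h l" using Kh l False by blast
          then have "C - {A} \<subseteq> fT m l" using l by auto
          then show ?thesis using TC True l by blast
        qed
      qed
      moreover have "finite (T m)" "card (T m) = t" using Tfin[OF mP(1)] by auto
      ultimately have "T i = T m" using Ti card_seteq[of "T m" "T i"] by simp
      then show False using TP[OF mP(1,2)] mP by blast
    next
      case False
      then obtain q where q: "q \<in> I - {m}" "A \<notin> fT m q" by blast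
      have qi: "q \<noteq> i" using q TP[OF hi] fTm mP by blast
      let ?g = "(fT i)(q := fT m q)"
      have g: "\<forall>l\<in>I-{i}. ?g l \<in> F l" using fTi fTm q by auto
      have "A \<notin> (\<Inter>l\<in>I-{i}. ?g l)" using q qi by auto
      then have "C - {A} \<subseteq> (\<Inter>l\<in>I-{i}. ?g l)" using K[OF g] by auto
      then have "C - {A} \<subseteq> ?g m" using mP mi by blast
      then have "B \<in> fT i m" using B BA q by auto
      then show False using BnfT by blast
    qed
  qed
  have res1: "card {i\<in>I-{j}. \<not> is_cover (t+1) C (F i)} \<le> 1"
    if "j \<in> I" "is_cover t C (Gfam r F j)" for j C
  proof -
    have "finite {i\<in>I-{j}. \<not> is_cover (t+1) C (F i)}" unfolding I_def by simp
    moreover have "\<forall>a1\<in>{i\<in>I-{j}. \<not> is_cover (t+1) C (F i)}. \<forall>a2\<in>{i\<in>I-{j}. \<not> is_cover (t+1) C (F i)}. a1 = a2"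
      using part1[OF that] by blast
    ultimately show ?thesis by (simp only: One_nat_def card_le_Suc0_iff_eq)
  qed
  have res2: "tau t (F i) = enat t" if hi: "i \<in> I" for i
  proof -
    have cT: "is_cover t (T i) (F i)" unfolding is_cover_def
    proof
      show "is_partition (T i)" using Tfin[OF hi] by blast
      show "\<forall>P\<in>F i. t \<le> card (T i \<inter> P)"
        using cross[OF hi] fT hi unfolding T_def by (metis Int_commute)
    qed
    have "tau t (F i) \<le> enat (card (T i))" unfolding tau_def
      by (rule INF_lower) (use cT Tfin[OF hi] in auto)
    moreover have "enat t \<le> tau t (F i)" unfolding tau_def
    proof (rule INF_greatest)
      fix C assume "C \<in> {C. finite C \<and> is_cover t C (F i)}"
      then have fC: "finite C" and cv: "\<forall>P\<in>F i. t \<le> card (C \<inter> P)" unfolding is_cover_def by auto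
      obtain P where "P \<in> F i" using assms(5) hi I_def by blast
      then have "t \<le> card (C \<inter> P)" using cv by blast
      also have "\<dots> \<le> card C" using fC by (simp add: card_mono)
      finally show "enat t \<le> enat (card C)" by simp
    qed
    ultimately show ?thesis using Tfin[OF hi] by simp
  qed
  have res3: "enat (t + 2) \<le> tau t (Gfam r F i)" if hi: "i \<in> I" for i
    unfolding tau_def
  proof (rule INF_greatest)
    fix C assume "C \<in> {C. finite C \<and> is_cover t C (Gfam r F i)}"
    then have "\<not> card C \<le> t + 1" using part2[OF hi] by blast
    then show "enat (t + 2) \<le> enat (card C)" by simp
  qed
  show ?thesis using res1 res2 res3 unfolding I_def by blast
qed

end
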